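(* Let $G=(N,A)$ be an asymmetric directed graph on $n$ vertices and consider the simple asymmetric fractional hedonic game it induces. Every sequence of IS deviations starting from the singleton partition is finite if and only if $G$ is acyclic. Moreover, if $G$ is acyclic, every such sequence has length $\mathcal O(n^4)$.
   Context: A fractional hedonic game (FHG) on agents $N$ is given by utility functions $v_i:N\to\mathbb R$ with $v_i(i)=0$; agent $i$'s utility for a coalition $C\ni i$ is $\frac{1}{|C|}\sum_{j\in C}v_i(j)$. A simple asymmetric FHG is one with $v_i(j)\in\{0,1\}$ and $v_i(j)=1\Rightarrow v_j(i)=0$; it is induced by the asymmetric digraph with arc $(i,j)$ iff $v_i(j)=1$. The singleton partition is $\{\{i\}:i\in N\}$. An IS deviation of agent $i$ from partition $\pi$ to $\pi'$ is a move of $i$ alone from $\pi(i)$ into another coalition of $\pi$ or into a new singleton such that $i$ strictly prefers $\pi'(i)$ to $\pi(i)$ and every $j\in\pi'(i)\setminus\{i\}$ weakly prefers $\pi'(j)$ to $\pi(j)$. *)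

theory Defs
  imports Complex_Main "HOL-Library.Disjoint_Sets"
begin

definition asym_digraph :: "nat set \<Rightarrow> (nat \<times> nat) set \<Rightarrow> bool" where
  "asym_digraph N A \<longleftrightarrow> finite N \<and> A \<subseteq> N \<times> N \<and>
     (\<forall>i j. (i, j) \<in> A \<longrightarrow> (j, i) \<notin> A)"

definition val :: "(nat \<times> nat) set \<Rightarrow> nat \<Rightarrow> nat \<Rightarrow> real" where
  "val A i j = (if (i, j) \<in> A then 1 else 0)"

definition util :: "(nat \<times> nat) set \<Rightarrow> nat \<Rightarrow> nat set \<Rightarrow> real" where
  "util A i C = (\<Sum>j\<in>C. val A i j) / real (card C)"

definition coal :: "nat set set \<Rightarrow> nat \<Rightarrow> nat set" where
  "coal P i = (THE C. C \<in> P \<and> i \<in> C)"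

definition singleton_partition :: "nat set \<Rightarrow> nat set set" where
  "singleton_partition N = (\<lambda>i. {i}) ` N"

text \<open>Partition resulting from agent i leaving its coalition and joining T
  (T a coalition of P other than its own, or T = {} for a new singleton).\<close>
definition move :: "nat set set \<Rightarrow> nat \<Rightarrow> nat set \<Rightarrow> nat set set" where
  "move P i T = (P - {coal P i, T}) \<union> {insert i T} \<union>
     (if coal P i - {i} = {} then {} else {coal P i - {i}})"

definition IS_deviation :: "nat set \<Rightarrow> (nat \<times> nat) set \<Rightarrow> nat set set \<Rightarrow> nat set set \<Rightarrow> bool" where
  "IS_deviation N A P P' \<longleftrightarrow>
     (\<exists>i\<in>N. \<exists>T. ((T \<in> P \<and> T \<noteq> coal P i) \<or> T = {}) \<and>
        P' = move P i T \<and>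
        util A i (insert i T) > util A i (coal P i) \<and>
        (\<forall>j\<in>T. util A j (insert i T) \<ge> util A j (coal P j)))"

end

theory Submission imports Defs begin

definition sinks :: "(nat \<times> nat) set \<Rightarrow> nat set \<Rightarrow> nat set" where
  "sinks A X = {x\<in>X. \<forall>y\<in>X. (x,y) \<notin> A}"
definition gg :: "(nat \<times> nat) set \<Rightarrow> nat \<Rightarrow> nat" where
  "gg A x = card {y. (y,x) \<in> A\<^sup>+}"
definition psi :: "(nat \<times> nat) set \<Rightarrow> nat set \<Rightarrow> nat" where
  "psi A X = (\<Sum>x\<in>sinks A X. Suc (gg A x))"
definition FF :: "nat set \<Rightarrow> (nat \<times> nat) set \<Rightarrow> nat set \<Rightarrow> nat" where
  "FF N A X = (2 * card N + 1) * psi A X + card X ^ 2"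
definition Phi :: "nat set \<Rightarrow> (nat \<times> nat) set \<Rightarrow> nat set set \<Rightarrow> nat" where
  "Phi N A P = (\<Sum>X\<in>P. FF N A X)"
definition chains :: "(nat \<times> nat) set \<Rightarrow> nat set set \<Rightarrow> bool" where
  "chains A P = (\<forall>C\<in>P. \<forall>x\<in>C. \<forall>y\<in>C. x \<noteq> y \<longrightarrow> (x,y) \<in> A \<or> (y,x) \<in> A)"
definition Inv :: "nat set \<Rightarrow> (nat \<times> nat) set \<Rightarrow> nat set set \<Rightarrow> bool" where
  "Inv N A P = (partition_on N P \<and> chains A P)"

lemma sum_val: "finite X \<Longrightarrow> sum (val A i) X = real (card {y\<in>X. (i,y)\<in>A})"
proof -
  assume fin: "finite X"
  have "sum (val A i) X = (\<Sum>y\<in>{y\<in>X. (i,y)\<in>A}. (1::real))"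
    unfolding val_def sum.inter_filter[OF fin] by simp
  thus ?thesis by simp
qed

lemma util_eq: "finite X \<Longrightarrow> util A i X = real (card {y\<in>X. (i,y)\<in>A}) / real (card X)"
  unfolding util_def by (simp add: sum_val)

lemma util_nonneg: "0 \<le> util A j X"
  unfolding util_def val_def by (auto intro!: sum_nonneg divide_nonneg_nonneg)

lemma coal_eq: "partition_on N P \<Longrightarrow> C \<in> P \<Longrightarrow> i \<in> C \<Longrightarrow> coal P i = C"
  unfolding coal_def
proof (rule the_equality)
  assume a: "partition_on N P" "C \<in> P" "i \<in> C"
  show "C \<in> P \<and> i \<in> C" using a by blast
  fix D assume "D \<in> P \<and> i \<in> D"
  with disjointD[OF partition_onD2[OF a(1)], of C D] show "D = C" using a by blast
qed

lemma sink_exists: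
  assumes "finite A" "acyclic A" "X \<noteq> {}"
  shows "\<exists>x\<in>X. \<forall>y\<in>X. (x,y) \<notin> A"
proof -
  have w: "wf (A\<inverse>)" using assms finite_acyclic_wf_converse by blast
  obtain x where "x \<in> X" using assms by blast
  then obtain z where z: "z \<in> X" "\<And>y. (y, z) \<in> A\<inverse> \<Longrightarrow> y \<notin> X"
    using wfE_min[OF w] by metis
  show ?thesis
  proof (rule bexI[OF _ z(1)])
    show "\<forall>y\<in>X. (z, y) \<notin> A" using z(2) by blast
  qed
qed

lemma pred_sub:
  assumes "A \<subseteq> N \<times> N"
  shows "{y. (y,x) \<in> A\<^sup>+} \<subseteq> N"
proof
  fix y assume "y \<in> {y. (y,x) \<in> A\<^sup>+}"
  hence "(y,x) \<in> A\<^sup>+" by simp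
  then obtain w where "(y,w) \<in> A" using tranclD by metis
  thus "y \<in> N" using assms by blast
qed

lemma gg_less:
  assumes "A \<subseteq> N \<times> N" "finite N" "acyclic A" "(x,i) \<in> A"
  shows "gg A x < gg A i"
proof -
  have sub: "{y. (y,x) \<in> A\<^sup>+} \<subseteq> {y. (y,i) \<in> A\<^sup>+}"
  proof
    fix y assume "y \<in> {y. (y,x) \<in> A\<^sup>+}"
    hence "(y,x) \<in> A\<^sup>+" by simp
    hence "(y,i) \<in> A\<^sup>+" using assms(4) by (rule trancl_into_trancl)
    thus "y \<in> {y. (y,i) \<in> A\<^sup>+}" by simp
  qed
  have "(x,i) \<in> A\<^sup>+" using assms(4) by (rule r_into_trancl)
  moreover have "(x,x) \<notin> A\<^sup>+" using assms(3) unfolding acyclic_def by blast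
  ultimately have ps: "{y. (y,x) \<in> A\<^sup>+} \<subset> {y. (y,i) \<in> A\<^sup>+}" using sub by blast
  have "finite {y. (y,i) \<in> A\<^sup>+}" using pred_sub[OF assms(1)] assms(2) finite_subset by blast
  thus ?thesis unfolding gg_def using ps psubset_card_mono by blast
qed

lemma gg_le:
  assumes "A \<subseteq> N \<times> N" "finite N"
  shows "gg A x \<le> card N"
  unfolding gg_def using pred_sub[OF assms(1)] assms(2) card_mono by blast


lemma arith1: "t + 1 < (s::nat) \<Longrightarrow> (t+1)^2 + (s-1)^2 < s^2 + t^2"
proof -
  assume a: "t + 1 < s"
  then obtain e where s: "s = t + 2 + e" by (metis add.commute add_Suc_right less_iff_Suc_add one_add_one plus_1_eq_Suc)
  show ?thesis unfolding s by (simp add: power2_eq_square algebra_simps)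
qed

lemma arith2: "(t::nat) \<le> n \<Longrightarrow> 0 < p \<Longrightarrow> (t+1)^2 < (2*n+1)*p + 1 + t^2"
proof -
  assume a: "t \<le> n" "0 < p"
  have "(2*n+1) * 1 \<le> (2*n+1)*p" using a(2) by (intro mult_left_mono) auto
  thus ?thesis using a(1) by (simp add: power2_eq_square algebra_simps)
qed

lemma arith3: "1 \<le> (s::nat) \<Longrightarrow> s + t \<le> n \<Longrightarrow> (t+1)^2 + (s-1)^2 < s^2 + t^2 + (2*n+1)"
proof -
  assume a: "1 \<le> s" "s + t \<le> n"
  then obtain r where s: "s = r + 1" by (metis add.commute le_Suc_ex)
  show ?thesis using a unfolding s by (simp add: power2_eq_square algebra_simps)
qed

lemma frac1: "0 < (a::real) \<Longrightarrow> 0 \<le> x \<Longrightarrow> x / a \<le> x / (a+1) \<Longrightarrow> x = 0"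
proof -
  assume a: "0 < a" "0 \<le> x" "x / a \<le> x / (a+1)"
  have "x * (a+1) \<le> x * a" using a by (simp add: field_simps)
  thus "x = 0" using a(2) by (simp add: algebra_simps)
qed

lemma frac2: "0 < (s::real) \<Longrightarrow> 1 \<le> d \<Longrightarrow> 0 < t \<Longrightarrow> d / s < 1 / t \<Longrightarrow> t < s"
proof -
  assume a: "0 < s" "1 \<le> d" "0 < t" "d / s < 1 / t"
  have "d * t < s" using a by (simp add: field_simps)
  moreover have "t \<le> d * t" using a by simp
  ultimately show "t < s" by linarith
qed

lemma chain_sink_unique:
  assumes "\<forall>x\<in>X. \<forall>y\<in>X. x \<noteq> y \<longrightarrow> (x,y) \<in> A \<or> (y,x) \<in> A" "a \<in> sinks A X"
  shows "sinks A X = {a}"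
  using assms unfolding sinks_def by blast

lemma psi_single: "sinks A X = {a} \<Longrightarrow> psi A X = Suc (gg A a)"
  unfolding psi_def by simp


lemma step:
  assumes ad: "asym_digraph N A" and ac: "acyclic A" and inv: "Inv N A P"
    and dev: "IS_deviation N A P P'"
  shows "Inv N A P' \<and> Phi N A P' < Phi N A P"
proof -
  have finN: "finite N" and AN: "A \<subseteq> N \<times> N" and asy: "\<And>a b. (a,b)\<in>A \<Longrightarrow> (b,a)\<notin>A"
    using ad unfolding asym_digraph_def by blast+
  have finA: "finite A" using finN AN finite_subset by blast
  have part: "partition_on N P" and ch: "chains A P" using inv unfolding Inv_def by blast+
  have UN: "\<Union>P = N" using partition_onD1[OF part] by simp
  have dis: "disjoint P" using partition_onD2[OF part] .
  have ne: "{} \<notin> P" using partition_onD3[OF part] .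
  have finP: "finite P" using finite_elements[OF finN part] .
  from dev obtain i T where iN: "i\<in>N" and Tc: "(T \<in> P \<and> T \<noteq> coal P i) \<or> T = {}"
    and P'eq: "P' = move P i T"
    and imp: "util A i (insert i T) > util A i (coal P i)"
    and wk: "\<forall>j\<in>T. util A j (insert i T) \<ge> util A j (coal P j)"
    unfolding IS_deviation_def by blast
  obtain C where CP: "C\<in>P" and iC: "i\<in>C" using iN UN by blast
  have coalC: "coal P i = C" using coal_eq[OF part CP iC] .
  have CN: "C \<subseteq> N" using CP UN by blast
  have finC: "finite C" using CN finN finite_subset by blast
  have irr: "\<And>a. (a,a) \<notin> A" using asy by blast
  have u_single: "\<And>a. util A a {a} = 0" unfolding util_def val_def using irr by simp
  have Tne0: "T \<noteq> {}"
  proof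
    assume "T = {}"
    hence "util A i (insert i T) = 0" using u_single by simp
    thus False using imp util_nonneg[of A i "coal P i"] by linarith
  qed
  have TP: "T \<in> P" and TC: "T \<noteq> C" using Tc coalC Tne0 by auto
  have TN: "T \<subseteq> N" using TP UN by blast
  have finT: "finite T" using TN finN finite_subset by blast
  have CT: "C \<inter> T = {}" using disjointD[OF dis CP TP] TC by blast
  have iT: "i \<notin> T" using CT iC by blast
  have coalT: "\<And>j. j\<in>T \<Longrightarrow> coal P j = T" using coal_eq[OF part TP] by blast
  have chC: "\<forall>x\<in>C. \<forall>y\<in>C. x \<noteq> y \<longrightarrow> (x,y) \<in> A \<or> (y,x) \<in> A" using ch CP unfolding chains_def by blast
  have chT: "\<forall>x\<in>T. \<forall>y\<in>T. x \<noteq> y \<longrightarrow> (x,y) \<in> A \<or> (y,x) \<in> A" using ch TP unfolding chains_def by blast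
  define s where "s = card C"
  define t where "t = card T"
  have s_pos: "s > 0" using finC iC unfolding s_def by (simp add: card_gt_0_iff) blast
  have t_pos: "t > 0" using finT Tne0 unfolding t_def by (simp add: card_gt_0_iff)
  have card_ins: "card (insert i T) = t + 1" using finT iT unfolding t_def by simp
  have finI: "finite (insert i T)" using finT by simp
  define d where "d j X = card {y\<in>X. (j,y)\<in>A}" for j X
  have dins: "\<And>j. (j,i)\<notin>A \<Longrightarrow> d j (insert i T) = d j T"
  proof -
    fix j assume "(j,i)\<notin>A"
    hence "{y\<in>insert i T. (j,y)\<in>A} = {y\<in>T. (j,y)\<in>A}" by auto
    thus "d j (insert i T) = d j T" unfolding d_def by simp
  qed
  have uI: "\<And>j. util A j (insert i T) = real (d j (insert i T)) / real (t+1)"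
    using util_eq[OF finI] card_ins unfolding d_def by simp
  have uT: "\<And>j. util A j T = real (d j T) / real t"
    using util_eq[OF finT] unfolding d_def t_def by simp
  have uC: "\<And>j. util A j C = real (d j C) / real s"
    using util_eq[OF finC] unfolding d_def s_def by simp
  have imp': "real (d i C) / real s < real (d i T) / real (t+1)"
    using imp unfolding coalC uI uC dins[OF irr] .
  have sinkT: "\<And>j. j\<in>T \<Longrightarrow> (j,i)\<notin>A \<Longrightarrow> j \<in> sinks A T"
  proof -
    fix j assume jT: "j\<in>T" and ji: "(j,i)\<notin>A"
    have "util A j T \<le> util A j (insert i T)" using wk jT coalT by auto
    hence "real (d j T) / real t \<le> real (d j T) / (real t + 1)"
      unfolding uI uT dins[OF ji] by (simp add: add.commute)
    moreover have "0 < real t" using t_pos by simp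
    ultimately have "real (d j T) = 0" using frac1[of "real t" "real (d j T)"] by simp
    hence "{y\<in>T. (j,y)\<in>A} = {}" using finT unfolding d_def by simp
    thus "j \<in> sinks A T" using jT unfolding sinks_def by blast
  qed
  have "d i T \<noteq> 0"
  proof
    assume "d i T = 0"
    thus False using imp' s_pos by (simp add: divide_less_0_iff)
  qed
  then obtain z where zT: "z\<in>T" and iz: "(i,z)\<in>A" unfolding d_def
    by (metis (mono_tags, lifting) card.empty empty_Collect_eq)
  have zs: "z \<in> sinks A T" using sinkT[OF zT] asy[OF iz] by blast
  have sinksT: "sinks A T = {z}" using chain_sink_unique[OF chT zs] .
  have Tother: "\<And>j. j\<in>T \<Longrightarrow> j\<noteq>z \<Longrightarrow> (j,i)\<in>A" using sinkT sinksT by blast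
  have diT: "{y\<in>T. (i,y)\<in>A} = {z}"
  proof
    show "{z} \<subseteq> {y\<in>T. (i,y)\<in>A}" using zT iz by blast
    show "{y\<in>T. (i,y)\<in>A} \<subseteq> {z}"
    proof
      fix y assume "y \<in> {y\<in>T. (i,y)\<in>A}"
      hence "y\<in>T" "(i,y)\<in>A" by auto
      hence "y \<in> sinks A T" using sinkT asy by blast
      thus "y \<in> {z}" using sinksT by blast
    qed
  qed
  hence d1: "d i T = 1" unfolding d_def by simp
  have ins_chain: "\<forall>x\<in>insert i T. \<forall>y\<in>insert i T. x \<noteq> y \<longrightarrow> (x,y) \<in> A \<or> (y,x) \<in> A"
    using chT Tother iz by blast
  have z_ins: "z \<in> sinks A (insert i T)"
    using zs asy[OF iz] unfolding sinks_def by blast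
  have sinks_ins: "sinks A (insert i T) = {z}" using chain_sink_unique[OF ins_chain z_ins] .
  have psi_ins: "psi A (insert i T) = psi A T" unfolding psi_def sinks_ins sinksT ..
  define R where "R = (if C - {i} = {} then {} else {C - {i}})"
  have P'eq2: "P' = (P - {C, T}) \<union> {insert i T} \<union> R" unfolding P'eq move_def coalC R_def by simp
  have memP': "\<And>D. D \<in> P' \<longleftrightarrow> (D \<in> P - {C,T} \<or> D = insert i T \<or> (C - {i} \<noteq> {} \<and> D = C - {i}))"
    unfolding P'eq2 R_def by (cases "C - {i} = {}") auto
  have insNP: "insert i T \<notin> P"
  proof
    assume a: "insert i T \<in> P"
    have "insert i T \<noteq> T" using iT by blast
    hence "insert i T \<inter> T = {}" using disjointD[OF dis a TP] by blast
    thus False using zT by blast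
  qed
  have CiNP: "C - {i} \<noteq> {} \<Longrightarrow> C - {i} \<notin> P"
  proof
    assume a: "C - {i} \<noteq> {}" "C - {i} \<in> P"
    have "C - {i} \<noteq> C" using iC by blast
    hence "(C - {i}) \<inter> C = {}" using disjointD[OF dis a(2) CP] by blast
    thus False using a(1) by blast
  qed
  have disD: "\<And>D. D \<in> P - {C,T} \<Longrightarrow> D \<inter> C = {} \<and> D \<inter> T = {}"
    using disjointD[OF dis] CP TP by blast
  have part': "partition_on N P'"
  proof (rule partition_onI)
    show "\<Union>P' = N"
    proof
      show "\<Union>P' \<subseteq> N"
      proof
        fix x assume "x \<in> \<Union>P'"
        then obtain D where D: "D \<in> P'" "x \<in> D" by blast
        from memP'[THEN iffD1, OF D(1)] show "x \<in> N"
        proof (elim disjE)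
          assume "D \<in> P - {C,T}" thus ?thesis using D(2) UN by blast
        next
          assume "D = insert i T" thus ?thesis using D(2) iN TN by blast
        next
          assume "C - {i} \<noteq> {} \<and> D = C - {i}" thus ?thesis using D(2) CN by blast
        qed
      qed
      show "N \<subseteq> \<Union>P'"
      proof
        fix x assume "x \<in> N"
        then obtain D where D: "D\<in>P" "x\<in>D" using UN by blast
        show "x \<in> \<Union>P'"
        proof (cases "D = C \<or> D = T")
          case True
          show ?thesis
          proof (cases "x = i \<or> D = T")
            case True
            hence "x \<in> insert i T" using D by blast
            moreover have "insert i T \<in> P'" using memP' by blast
            ultimately show ?thesis by blast
          next
            case False
            hence "D = C" "x \<noteq> i" using \<open>D = C \<or> D = T\<close> by auto
            hence "x \<in> C - {i}" using D by blast
            moreover hence "C - {i} \<in> P'" using memP' by blast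
            ultimately show ?thesis by blast
          qed
        next
          case False
          hence "D \<in> P'" using memP' D by blast
          thus ?thesis using D by blast
        qed
      qed
    qed
    show "\<And>p q. p \<in> P' \<Longrightarrow> q \<in> P' \<Longrightarrow> p \<noteq> q \<Longrightarrow> disjnt p q"
    proof -
      fix p q assume p: "p \<in> P'" and q: "q \<in> P'" and pq: "p \<noteq> q"
      have P1: "\<And>p q. p \<in> P - {C,T} \<Longrightarrow> q \<in> P - {C,T} \<Longrightarrow> p \<noteq> q \<Longrightarrow> p \<inter> q = {}"
        using disjointD[OF dis] by blast
      have f1: "\<And>D. D \<in> P - {C,T} \<Longrightarrow> D \<inter> insert i T = {} \<and> insert i T \<inter> D = {}"
        using disD iC by blast
      have f2: "\<And>D. D \<in> P - {C,T} \<Longrightarrow> D \<inter> (C - {i}) = {} \<and> (C - {i}) \<inter> D = {}"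
        using disD by blast
      have f3: "insert i T \<inter> (C - {i}) = {} \<and> (C - {i}) \<inter> insert i T = {}"
        using CT by blast
      from memP'[THEN iffD1, OF p] memP'[THEN iffD1, OF q] have "p \<inter> q = {}"
      proof (elim disjE conjE)
      qed (use pq P1 f1 f2 f3 in simp_all)
      thus "disjnt p q" unfolding disjnt_def .
    qed
    show "{} \<notin> P'" unfolding P'eq2 R_def using ne by auto
  qed
  have ch': "chains A P'"
    unfolding chains_def
  proof
    fix D assume "D \<in> P'"
    hence "D \<in> P \<or> D = insert i T \<or> D = C - {i}" using memP' by blast
    thus "\<forall>x\<in>D. \<forall>y\<in>D. x \<noteq> y \<longrightarrow> (x,y) \<in> A \<or> (y,x) \<in> A"
      using ch ins_chain chC unfolding chains_def by blast
  qed
  have inv': "Inv N A P'" unfolding Inv_def using part' ch' by blast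
  define K where "K = 2 * card N + 1"
  have FFe: "\<And>X. FF N A X = K * psi A X + card X ^ 2" unfolding FF_def K_def ..
  have finR: "finite R" unfolding R_def by simp
  have Phi_P: "Phi N A P = FF N A C + FF N A T + sum (FF N A) (P - {C,T})"
  proof -
    have "Phi N A P = FF N A C + sum (FF N A) (P - {C})" unfolding Phi_def using sum.remove[OF finP CP] .
    also have "sum (FF N A) (P - {C}) = FF N A T + sum (FF N A) (P - {C} - {T})"
      using sum.remove[of "P - {C}" T] finP TP TC by blast
    also have "P - {C} - {T} = P - {C,T}" by blast
    finally show ?thesis by simp
  qed
  have Phi_P': "Phi N A P' = FF N A (insert i T) + sum (FF N A) R + sum (FF N A) (P - {C,T})"
  proof -
    have e: "P' = R \<union> insert (insert i T) (P - {C,T})" unfolding P'eq2 by blast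
    have d1: "R \<inter> insert (insert i T) (P - {C,T}) = {}"
    proof (cases "C - {i} = {}")
      case True thus ?thesis unfolding R_def by simp
    next
      case False
      have "C - {i} \<noteq> insert i T" by blast
      moreover have "C - {i} \<notin> P" using CiNP[OF False] .
      moreover have "R = {C - {i}}" unfolding R_def using False by simp
      ultimately show ?thesis by blast
    qed
    have "Phi N A P' = sum (FF N A) R + sum (FF N A) (insert (insert i T) (P - {C,T}))"
      unfolding Phi_def e using sum.union_disjoint[OF finR _ d1] finP by simp
    also have "sum (FF N A) (insert (insert i T) (P - {C,T})) = FF N A (insert i T) + sum (FF N A) (P - {C,T})"
      using sum.insert[of "P - {C,T}" "insert i T"] finP insNP by simp
    finally show ?thesis by simp
  qed
  have tn: "t \<le> card N" unfolding t_def using card_mono[OF finN TN] .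
  have stn: "s + t \<le> card N"
  proof -
    have "card (C \<union> T) = s + t" unfolding s_def t_def using card_Un_disjoint[OF finC finT CT] .
    moreover have "card (C \<union> T) \<le> card N" using card_mono[OF finN] CN TN by simp
    ultimately show ?thesis by simp
  qed
  have cardCi: "card (C - {i}) = s - 1" unfolding s_def using finC iC by simp
  have key: "FF N A (insert i T) + sum (FF N A) R < FF N A C + FF N A T"
  proof (cases "i \<in> sinks A C")
    case False
    then obtain y where yC: "y \<in> C" and iy: "(i,y) \<in> A" unfolding sinks_def using iC by blast
    have "d i C \<noteq> 0" using yC iy finC unfolding d_def by auto
    hence "real (d i C) / real s < 1 / real (t+1)" using imp' d1 by simp
    moreover have "0 < real s" "1 \<le> real (d i C)" "0 < real (t+1)" using s_pos \<open>d i C \<noteq> 0\<close> by auto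
    ultimately have "real (t+1) < real s" using frac2[of "real s" "real (d i C)" "real (t+1)"] by blast
    hence ts: "t + 1 < s" by linarith
    obtain zc where zcC: "zc \<in> C" and zcs: "\<forall>y\<in>C. (zc,y) \<notin> A"
      using sink_exists[OF finA ac] iC by blast
    have zci: "zc \<noteq> i" using zcs yC iy by blast
    have zcs1: "zc \<in> sinks A C" using zcC zcs unfolding sinks_def by blast
    have sC: "sinks A C = {zc}" using chain_sink_unique[OF chC zcs1] .
    have chCi: "\<forall>x\<in>C - {i}. \<forall>y\<in>C - {i}. x \<noteq> y \<longrightarrow> (x,y) \<in> A \<or> (y,x) \<in> A" using chC by blast
    have zcs2: "zc \<in> sinks A (C - {i})" using zcs1 zci unfolding sinks_def by blast
    have sCi: "sinks A (C - {i}) = {zc}" using chain_sink_unique[OF chCi zcs2] .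
    have Rv: "R = {C - {i}}" unfolding R_def using zcC zci by auto
    have pC: "psi A (C - {i}) = psi A C" unfolding psi_def sC sCi ..
    have "(t+1)^2 + (s-1)^2 < s^2 + t^2" using arith1[OF ts] .
    moreover have "FF N A (insert i T) = K*psi A T + (t+1)^2" using FFe psi_ins card_ins by simp
    moreover have "sum (FF N A) R = K*psi A C + (s-1)^2" using Rv FFe pC cardCi by simp
    moreover have "FF N A C = K*psi A C + s^2" "FF N A T = K * psi A T + t^2" using FFe s_def t_def by simp_all
    ultimately show ?thesis by linarith
  next
    case True
    have sC: "sinks A C = {i}" using chain_sink_unique[OF chC True] .
    have pC: "psi A C = Suc (gg A i)" using psi_single[OF sC] .
    show ?thesis
    proof (cases "C - {i} = {}")
      case True
      hence Rv: "R = {}" unfolding R_def by simp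
      have "C = {i}" using True iC by blast
      hence Cs: "card C = 1" by simp
      have "(t+1)^2 < K * psi A C + 1 + t^2" unfolding K_def using arith2[OF tn, of "psi A C"] pC by simp
      moreover have "FF N A (insert i T) = K*psi A T + (t+1)^2" using FFe psi_ins card_ins by simp
      moreover have "sum (FF N A) R = 0" using Rv by simp
      moreover have "FF N A C = K*psi A C + 1" "FF N A T = K * psi A T + t^2" using FFe Cs t_def by simp_all
      ultimately show ?thesis by linarith
    next
      case False
      obtain x where xC: "x \<in> C - {i}" and xs: "\<forall>y\<in>C - {i}. (x,y) \<notin> A"
        using sink_exists[OF finA ac False] by blast
      have xi: "(x,i) \<in> A" using chC xC True unfolding sinks_def by blast
      have chCi: "\<forall>x\<in>C - {i}. \<forall>y\<in>C - {i}. x \<noteq> y \<longrightarrow> (x,y) \<in> A \<or> (y,x) \<in> A" using chC by blast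
      have xs2: "x \<in> sinks A (C - {i})" using xC xs unfolding sinks_def by blast
      have sCi: "sinks A (C - {i}) = {x}" using chain_sink_unique[OF chCi xs2] .
      have pCi: "psi A (C - {i}) = Suc (gg A x)" using psi_single[OF sCi] .
      have gl: "gg A x < gg A i" using gg_less[OF AN finN ac xi] .
      have Rv: "R = {C - {i}}" unfolding R_def using False by simp
      have "(t+1)^2 + (s-1)^2 < s^2 + t^2 + K" unfolding K_def
        using arith3[of s t "card N"] s_pos stn by simp
      moreover have "K * psi A (C - {i}) + K \<le> K * psi A C"
      proof -
        have "psi A (C - {i}) + 1 \<le> psi A C" using pCi pC gl by simp
        hence "K * (psi A (C - {i}) + 1) \<le> K * psi A C" by (rule mult_left_mono) simp
        thus ?thesis by (simp add: algebra_simps)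
      qed
      moreover have "FF N A (insert i T) = K*psi A T + (t+1)^2" using FFe psi_ins card_ins by simp
      moreover have "sum (FF N A) R = K*psi A (C - {i}) + (s-1)^2" using Rv FFe cardCi by simp
      moreover have "FF N A C = K*psi A C + s^2" "FF N A T = K * psi A T + t^2" using FFe s_def t_def by simp_all
      ultimately show ?thesis by linarith
    qed
  qed
  have "Phi N A P' < Phi N A P" unfolding Phi_P Phi_P' using key by simp
  thus ?thesis using inv' by blast
qed


lemma chain_desc:
  assumes ad: "asym_digraph N A" and ac: "acyclic A" and f0: "f 0 = singleton_partition N"
    and dev: "\<forall>k<m. IS_deviation N A (f k) (f (Suc k))"
  shows "k \<le> m \<Longrightarrow> Inv N A (f k) \<and> Phi N A (f k) + k \<le> Phi N A (f 0)"
proof (induction k)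
  case 0
  have "Inv N A (f 0)" unfolding f0 Inv_def chains_def singleton_partition_def
    using partition_on_singletons by auto
  thus ?case by simp
next
  case (Suc k)
  hence IH: "Inv N A (f k)" "Phi N A (f k) + k \<le> Phi N A (f 0)" by auto
  have "IS_deviation N A (f k) (f (Suc k))" using dev Suc.prems by simp
  from step[OF ad ac IH(1) this] IH(2) show ?case by simp
qed

lemma poly_bound: "(n::nat) * ((2*n+1)*(n+1) + 1) \<le> 7 * n^4"
proof (cases "n = 0")
  case True thus ?thesis by simp
next
  case False
  hence n1: "1 \<le> n" by simp
  have e: "n * ((2*n+1)*(n+1) + 1) = 2*n^3 + 3*n^2 + 2*n" by (simp add: power2_eq_square power3_eq_cube algebra_simps)
  have "n^3 \<le> n^4" "n^2 \<le> n^4" "n^1 \<le> n^4"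
    using power_increasing[of 3 4 n] power_increasing[of 2 4 n] power_increasing[of 1 4 n] n1 by simp_all
  thus ?thesis unfolding e by simp
qed

lemma Phi_sing_bound:
  assumes ad: "asym_digraph N A"
  shows "Phi N A (singleton_partition N) \<le> card N * ((2*card N+1)*(card N+1) + 1)"
proof -
  have finN: "finite N" and AN: "A \<subseteq> N \<times> N" and asy: "\<And>a b. (a,b)\<in>A \<Longrightarrow> (b,a)\<notin>A"
    using ad unfolding asym_digraph_def by blast+
  have b: "\<And>X. X \<in> singleton_partition N \<Longrightarrow> FF N A X \<le> (2*card N+1)*(card N+1) + 1"
  proof -
    fix X assume "X \<in> singleton_partition N"
    then obtain x where X: "X = {x}" unfolding singleton_partition_def by blast
    have "sinks A X = {x}" unfolding X sinks_def using asy by blast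
    hence "psi A X = Suc (gg A x)" by (rule psi_single)
    also have "\<dots> \<le> card N + 1" using gg_le[OF AN finN] by simp
    finally have "(2*card N+1) * psi A X \<le> (2*card N+1)*(card N+1)" by (rule mult_left_mono) simp
    thus "FF N A X \<le> (2*card N+1)*(card N+1) + 1" unfolding FF_def X by simp
  qed
  have 1: "Phi N A (singleton_partition N) \<le> card (singleton_partition N) * ((2*card N+1)*(card N+1) + 1)"
    unfolding Phi_def using sum_bounded_above[OF b] by simp
  have "card (singleton_partition N) \<le> card N" unfolding singleton_partition_def by (rule card_image_le[OF finN])
  hence 2: "card (singleton_partition N) * ((2*card N+1)*(card N+1) + 1) \<le> card N * ((2*card N+1)*(card N+1) + 1)"
    by (rule mult_right_mono) simp
  from 1 2 show ?thesis by (rule order_trans)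
qed

lemma bound_part:
  assumes ad: "asym_digraph N A" and ac: "acyclic A" and f0: "f 0 = singleton_partition N"
    and dev: "\<forall>k<m. IS_deviation N A (f k) (f (Suc k))"
  shows "m \<le> 7 * card N ^ 4"
proof -
  have "Phi N A (f m) + m \<le> Phi N A (f 0)" using chain_desc[OF ad ac f0 dev, of m] by simp
  hence "m \<le> Phi N A (singleton_partition N)" using f0 by simp
  also have "\<dots> \<le> 7 * card N ^ 4" using Phi_sing_bound[OF ad] poly_bound[of "card N"] by linarith
  finally show ?thesis .
qed


definition QQ :: "nat set \<Rightarrow> nat \<Rightarrow> nat \<Rightarrow> nat set set" where
  "QQ N a b = (\<lambda>y. {y}) ` (N - {a, b}) \<union> {{a, b}}"

lemma coal_direct: "C \<in> P \<Longrightarrow> i \<in> C \<Longrightarrow> (\<And>D. D \<in> P \<Longrightarrow> i \<in> D \<Longrightarrow> D = C) \<Longrightarrow> coal P i = C"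
  unfolding coal_def by (rule the_equality) blast+

lemma util_pair:
  assumes "(a,b) \<in> A" "\<And>x y. (x,y) \<in> A \<Longrightarrow> (y,x) \<notin> A"
  shows "util A a {a,b} = 1/2" "util A b {a,b} = 0"
proof -
  have ab: "a \<noteq> b" using assms by blast
  have na: "(a,a) \<notin> A" "(b,b) \<notin> A" "(b,a) \<notin> A" using assms by blast+
  show "util A a {a,b} = 1/2" unfolding util_def val_def using ab na assms(1) by simp
  show "util A b {a,b} = 0" unfolding util_def val_def using ab na by simp
qed

lemma util_single: "(a,a) \<notin> A \<Longrightarrow> util A a {a} = 0"
  unfolding util_def val_def by simp

lemma dev_first:
  assumes ad: "asym_digraph N A" and ab: "(a,b) \<in> A"
  shows "IS_deviation N A (singleton_partition N) (QQ N a b)"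
proof -
  have AN: "A \<subseteq> N \<times> N" and asy: "\<And>x y. (x,y)\<in>A \<Longrightarrow> (y,x)\<notin>A"
    using ad unfolding asym_digraph_def by blast+
  have aN: "a \<in> N" and bN: "b \<in> N" using AN ab by blast+
  have neq: "a \<noteq> b" using asy ab by blast
  let ?S = "singleton_partition N"
  have pS: "partition_on N ?S" unfolding singleton_partition_def by (rule partition_on_singletons)
  have aS: "{a} \<in> ?S" unfolding singleton_partition_def using aN by (rule imageI)
  have bS: "{b} \<in> ?S" unfolding singleton_partition_def using bN by (rule imageI)
  have ca: "coal ?S a = {a}" using coal_eq[OF pS aS] by simp
  have cb: "coal ?S b = {b}" using coal_eq[OF pS bS] by simp
  have sab: "\<And>y. {y} \<noteq> {a,b}" using neq by (metis insertI1 insert_commute singletonD)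
  have sing: "\<And>y z. ({y} = {z}) = (y = z)" by simp
  have mv0: "move ?S a {b} = (?S - {{a}, {b}}) \<union> {{a,b}}" unfolding move_def ca by simp
  have mv1: "?S - {{a}, {b}} = (\<lambda>y. {y}) ` (N - {a,b})"
  proof
    show "?S - {{a}, {b}} \<subseteq> (\<lambda>y. {y}) ` (N - {a,b})"
    proof
      fix X assume "X \<in> ?S - {{a}, {b}}"
      then obtain y where "y \<in> N" "X = {y}" "X \<noteq> {a}" "X \<noteq> {b}" unfolding singleton_partition_def by blast
      thus "X \<in> (\<lambda>y. {y}) ` (N - {a,b})" by blast
    qed
    show "(\<lambda>y. {y}) ` (N - {a,b}) \<subseteq> ?S - {{a}, {b}}"
    proof
      fix X assume "X \<in> (\<lambda>y. {y}) ` (N - {a,b})"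
      then obtain y where "y \<in> N" "y \<noteq> a" "y \<noteq> b" "X = {y}" by blast
      thus "X \<in> ?S - {{a}, {b}}" unfolding singleton_partition_def by blast
    qed
  qed
  have mv: "move ?S a {b} = QQ N a b" unfolding mv0 mv1 QQ_def ..
  show ?thesis unfolding IS_deviation_def
  proof (intro bexI[OF _ aN] exI[of _ "{b}"] conjI)
    show "{b} \<in> ?S \<and> {b} \<noteq> coal ?S a \<or> {b} = {}"
      using bS neq unfolding ca by simp
    show "QQ N a b = move ?S a {b}" using mv by simp
    show "util A a (coal ?S a) < util A a (insert a {b})"
    proof -
      have "(a,a) \<notin> A" using asy by blast
      hence "util A a {a} = 0" by (rule util_single)
      moreover have "util A a {a,b} = 1/2" using util_pair(1)[OF ab asy] .
      ultimately show ?thesis unfolding ca by simp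
    qed
    show "\<forall>j\<in>{b}. util A j (coal ?S j) \<le> util A j (insert a {b})"
    proof -
      have "(b,b) \<notin> A" using asy by blast
      hence "util A b {b} = 0" by (rule util_single)
      thus ?thesis using cb util_nonneg[of A b "insert a {b}"] by simp
    qed
  qed
qed

lemma dev_step:
  assumes ad: "asym_digraph N A" and ab: "(a,b) \<in> A" and bc: "(b,c) \<in> A"
  shows "IS_deviation N A (QQ N a b) (QQ N b c)"
proof -
  have AN: "A \<subseteq> N \<times> N" and asy: "\<And>x y. (x,y)\<in>A \<Longrightarrow> (y,x)\<notin>A"
    using ad unfolding asym_digraph_def by blast+
  have aN: "a \<in> N" and bN: "b \<in> N" and cN: "c \<in> N" using AN ab bc by blast+
  have ab': "a \<noteq> b" and bc': "b \<noteq> c" and ac': "a \<noteq> c" using asy ab bc by blast+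
  have sab: "\<And>y. {y} \<noteq> {a,b}" using ab' by (metis insertI1 insert_commute singletonD)
  have sbc: "\<And>y. {y} \<noteq> {b,c}" using bc' by (metis insertI1 insert_commute singletonD)
  let ?S = "QQ N a b"
  have memS: "\<And>D. D \<in> ?S \<longleftrightarrow> (\<exists>y. y \<in> N \<and> y \<noteq> a \<and> y \<noteq> b \<and> D = {y}) \<or> D = {a,b}"
    unfolding QQ_def by blast
  have cb: "coal ?S b = {a,b}"
  proof (rule coal_direct)
    show "{a,b} \<in> ?S" using memS by blast
    show "b \<in> {a,b}" by simp
    fix D assume "D \<in> ?S" "b \<in> D"
    hence "(\<exists>y. y \<in> N \<and> y \<noteq> a \<and> y \<noteq> b \<and> D = {y}) \<or> D = {a,b}" using memS by simp
    thus "D = {a,b}"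
    proof (elim disjE exE conjE)
      fix y assume "y \<noteq> b" "D = {y}"
      thus "D = {a,b}" using \<open>b \<in> D\<close> by simp
    qed
  qed
  have "c \<in> N - {a,b}" using cN ac' bc' by blast
  hence "{c} \<in> (\<lambda>y. {y}) ` (N - {a,b})" by (rule imageI)
  hence cS: "{c} \<in> ?S" unfolding QQ_def by (rule UnI1)
  have cc: "coal ?S c = {c}"
  proof (rule coal_direct)
    show "{c} \<in> ?S" using cS .
    show "c \<in> {c}" by simp
    fix D assume "D \<in> ?S" "c \<in> D"
    hence "(\<exists>y. y \<in> N \<and> y \<noteq> a \<and> y \<noteq> b \<and> D = {y}) \<or> D = {a,b}" using memS by simp
    thus "D = {c}"
    proof (elim disjE exE conjE)
      fix y assume "D = {y}"
      thus "D = {c}" using \<open>c \<in> D\<close> by simp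
    next
      assume "D = {a,b}"
      thus "D = {c}" using \<open>c \<in> D\<close> ac' bc' by simp
    qed
  qed
  have e1: "{a,b} - {b} = {a}" using ab' by blast
  have mv0: "move ?S b {c} = (?S - {{a,b}, {c}}) \<union> {{b,c}} \<union> {{a}}"
    unfolding move_def cb e1 by simp
  have mv: "move ?S b {c} = QQ N b c"
  proof
    show "move ?S b {c} \<subseteq> QQ N b c"
    proof
      fix X assume "X \<in> move ?S b {c}"
      hence "X \<in> ?S - {{a,b}, {c}} \<or> X = {b,c} \<or> X = {a}" unfolding mv0 by blast
      thus "X \<in> QQ N b c"
      proof (elim disjE)
        assume "X \<in> ?S - {{a,b}, {c}}"
        then obtain y where "y \<in> N" "y \<noteq> a" "y \<noteq> b" "X = {y}" "X \<noteq> {c}" using memS by blast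
        thus ?thesis unfolding QQ_def by blast
      qed (use aN ab' ac' in \<open>auto simp: QQ_def\<close>)
    qed
    show "QQ N b c \<subseteq> move ?S b {c}"
    proof
      fix X assume "X \<in> QQ N b c"
      hence "(\<exists>y. y \<in> N \<and> y \<noteq> b \<and> y \<noteq> c \<and> X = {y}) \<or> X = {b,c}" unfolding QQ_def by blast
      thus "X \<in> move ?S b {c}"
      proof (elim disjE exE conjE)
        fix y assume y: "y \<in> N" "y \<noteq> b" "y \<noteq> c" "X = {y}"
        show ?thesis
        proof (cases "y = a")
          case True thus ?thesis unfolding mv0 using y by blast
        next
          case False
          hence "X \<in> ?S" using memS y by blast
          moreover have "X \<noteq> {a,b}" using sab y by blast
          moreover have "X \<noteq> {c}" using y by blast
          ultimately show ?thesis unfolding mv0 by blast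
        qed
      qed (simp add: mv0)
    qed
  qed
  show ?thesis unfolding IS_deviation_def
  proof (intro bexI[OF _ bN] exI[of _ "{c}"] conjI)
    show "{c} \<in> ?S \<and> {c} \<noteq> coal ?S b \<or> {c} = {}"
      using cS sab unfolding cb by blast
    show "QQ N b c = move ?S b {c}" using mv by simp
    have "util A b {a,b} = 0" using util_pair(2)[OF ab asy] .
    moreover have "util A b {b,c} = 1/2" using util_pair(1)[OF bc asy] .
    ultimately show "util A b (coal ?S b) < util A b (insert b {c})" unfolding cb by simp
    show "\<forall>j\<in>{c}. util A j (coal ?S j) \<le> util A j (insert b {c})"
    proof -
      have "(c,c) \<notin> A" using asy by blast
      hence "util A c {c} = 0" by (rule util_single)
      thus ?thesis using cc util_nonneg[of A c "insert b {c}"] by simp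
    qed
  qed
qed

lemma cyclic_inf:
  assumes ad: "asym_digraph N A" and nac: "\<not> acyclic A"
  shows "\<exists>f. f 0 = singleton_partition N \<and> (\<forall>k. IS_deviation N A (f k) (f (Suc k)))"
proof -
  obtain x where xx: "(x,x) \<in> A\<^sup>+" using nac unfolding acyclic_def by blast
  define S where "S = {y. (y,x) \<in> A\<^sup>+}"
  have xS: "x \<in> S" using xx S_def by simp
  have nx: "\<forall>y\<in>S. \<exists>z. z \<in> S \<and> (y,z) \<in> A"
  proof
    fix y assume "y \<in> S"
    hence "(y,x) \<in> A\<^sup>+" unfolding S_def by simp
    then obtain z where yz: "(y,z) \<in> A" and zx: "(z,x) \<in> A\<^sup>*" using tranclD by metis
    have "z \<in> S"
    proof (cases "z = x")
      case True thus ?thesis using xS by simp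
    next
      case False thus ?thesis using zx unfolding S_def by (simp add: rtrancl_eq_or_trancl)
    qed
    thus "\<exists>z. z \<in> S \<and> (y,z) \<in> A" using yz by blast
  qed
  then obtain nxt where nxt: "\<forall>y\<in>S. nxt y \<in> S \<and> (y, nxt y) \<in> A" by metis
  define w where "w k = (nxt ^^ k) x" for k
  have wS: "w k \<in> S" for k
    by (induction k) (auto simp: w_def xS nxt)
  have wA: "(w k, w (Suc k)) \<in> A" for k
    using nxt wS[of k] unfolding w_def by simp
  define f where "f k = (case k of 0 \<Rightarrow> singleton_partition N | Suc j \<Rightarrow> QQ N (w j) (w (Suc j)))" for k
  show ?thesis
  proof (intro exI[of _ f] conjI allI)
    show "f 0 = singleton_partition N" unfolding f_def by simp
    fix k show "IS_deviation N A (f k) (f (Suc k))"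
    proof (cases k)
      case 0
      thus ?thesis unfolding f_def using dev_first[OF ad wA[of 0]] by simp
    next
      case (Suc j)
      thus ?thesis unfolding f_def using dev_step[OF ad wA[of j] wA[of "Suc j"]] by simp
    qed
  qed
qed


theorem proposition5p5:
  shows "(\<forall>N A. asym_digraph N A \<longrightarrow>
            ((\<nexists>f :: nat \<Rightarrow> nat set set. f 0 = singleton_partition N \<and>
                 (\<forall>k. IS_deviation N A (f k) (f (Suc k))))
             \<longleftrightarrow> acyclic A))
       \<and> (\<exists>c :: nat. \<forall>N A (f :: nat \<Rightarrow> nat set set) m.
            asym_digraph N A \<and> acyclic A \<and> f 0 = singleton_partition N \<and>
            (\<forall>k<m. IS_deviation N A (f k) (f (Suc k)))
            \<longrightarrow> m \<le> c * card N ^ 4)"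
proof (intro conjI allI impI)
  fix N A assume ad: "asym_digraph N A"
  show "(\<nexists>f :: nat \<Rightarrow> nat set set. f 0 = singleton_partition N \<and>
                 (\<forall>k. IS_deviation N A (f k) (f (Suc k)))) \<longleftrightarrow> acyclic A"
  proof
    assume "\<nexists>f :: nat \<Rightarrow> nat set set. f 0 = singleton_partition N \<and>
                 (\<forall>k. IS_deviation N A (f k) (f (Suc k)))"
    thus "acyclic A" using cyclic_inf[OF ad] by blast
  next
    assume ac: "acyclic A"
    show "\<nexists>f :: nat \<Rightarrow> nat set set. f 0 = singleton_partition N \<and>
                 (\<forall>k. IS_deviation N A (f k) (f (Suc k)))"
    proof
      assume "\<exists>f :: nat \<Rightarrow> nat set set. f 0 = singleton_partition N \<and>
                 (\<forall>k. IS_deviation N A (f k) (f (Suc k)))"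
      then obtain f :: "nat \<Rightarrow> nat set set" where f0: "f 0 = singleton_partition N"
        and dv: "\<forall>k. IS_deviation N A (f k) (f (Suc k))" by blast
      have "\<forall>k<7 * card N ^ 4 + 1. IS_deviation N A (f k) (f (Suc k))" using dv by blast
      from bound_part[OF ad ac f0 this] show False by simp
    qed
  qed
next
  show "\<exists>c :: nat. \<forall>N A (f :: nat \<Rightarrow> nat set set) m.
            asym_digraph N A \<and> acyclic A \<and> f 0 = singleton_partition N \<and>
            (\<forall>k<m. IS_deviation N A (f k) (f (Suc k)))
            \<longrightarrow> m \<le> c * card N ^ 4"
    using bound_part by blast
qed

end
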